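(* Let $d,t$ be positive integers with $2t\le d$, and let $G'$ be a spanning subgraph of an $n$-vertex graph $G$ such that the pair $(G',G)$ is $(d,t)$-useful, $\delta(G')\ge d$, and $e\,(2\Delta(G')^2+1)\le \exp(t^2/(2d))$. Then $\mathrm{sh}(G)=\lceil\log_2 n\rceil$.
   Context: A family of subsets $V_1,\dots,V_k$ of a set $V$ is a separating system of $V$ if for every two distinct $u,v\in V$ there is $i$ with $|V_i\cap\{u,v\}|=1$. For a graph $G$, $\mathrm{sh}(G)$ is the minimum size of a separating system of $V(G)$ consisting of sets $S$ such that the induced subgraph $G[S]$ contains a Hamilton cycle. For positive integers $d,t$ with $2t\le d$ and $n$-vertex graphs $G'\subseteq G$ on the same vertex set, the pair $(G',G)$ is $(d,t)$-useful if for every $S\subseteq V(G)$ with $|S|=\lceil n/2\rceil$ and $\delta(G'[S])\ge d/2-t$, the induced subgraph $G[S]$ is Hamiltonian. $\delta,\Delta$ denote minimum and maximum degree; $e$ is Euler's number. *)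

theory Defs
  imports Complex_Main
begin

definition graph :: "'a set \<Rightarrow> ('a \<Rightarrow> 'a \<Rightarrow> bool) \<Rightarrow> bool" where
  "graph V E \<longleftrightarrow> finite V \<and> (\<forall>u v. E u v \<longrightarrow> u \<in> V \<and> v \<in> V)
     \<and> (\<forall>u v. E u v \<longrightarrow> E v u) \<and> (\<forall>v. \<not> E v v)"

definition deg_in :: "('a \<Rightarrow> 'a \<Rightarrow> bool) \<Rightarrow> 'a set \<Rightarrow> 'a \<Rightarrow> nat" where
  "deg_in E S v = card {u \<in> S. E v u}"

definition max_degree :: "'a set \<Rightarrow> ('a \<Rightarrow> 'a \<Rightarrow> bool) \<Rightarrow> nat" where
  "max_degree V E = Max (deg_in E V ` V)"

definition min_degree :: "'a set \<Rightarrow> ('a \<Rightarrow> 'a \<Rightarrow> bool) \<Rightarrow> nat" where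
  "min_degree V E = Min (deg_in E V ` V)"

text \<open>The induced subgraph E[S] contains a Hamilton cycle (a cycle, hence at least 3 vertices,
  through all vertices of S).\<close>
definition hamiltonian_on :: "('a \<Rightarrow> 'a \<Rightarrow> bool) \<Rightarrow> 'a set \<Rightarrow> bool" where
  "hamiltonian_on E S \<longleftrightarrow> (\<exists>xs. distinct xs \<and> set xs = S \<and> length xs \<ge> 3 \<and>
      (\<forall>i < length xs. E (xs ! i) (xs ! ((i + 1) mod length xs))))"

definition separating :: "'a set \<Rightarrow> 'a set set \<Rightarrow> bool" where
  "separating V F \<longleftrightarrow> (\<forall>u\<in>V. \<forall>v\<in>V. u \<noteq> v \<longrightarrow> (\<exists>S\<in>F. card (S \<inter> {u, v}) = 1))"

definition sh :: "'a set \<Rightarrow> ('a \<Rightarrow> 'a \<Rightarrow> bool) \<Rightarrow> nat" where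
  "sh V E = (INF F \<in> {F. finite F \<and> (\<forall>S\<in>F. S \<subseteq> V \<and> hamiltonian_on E S) \<and> separating V F}. card F)"

definition useful :: "nat \<Rightarrow> nat \<Rightarrow> 'a set \<Rightarrow> ('a \<Rightarrow> 'a \<Rightarrow> bool) \<Rightarrow> ('a \<Rightarrow> 'a \<Rightarrow> bool) \<Rightarrow> bool" where
  "useful d t V E' E \<longleftrightarrow> (\<forall>S. S \<subseteq> V \<and> card S = nat \<lceil>real (card V) / 2\<rceil>
      \<and> (\<forall>v\<in>S. real (deg_in E' S v) \<ge> real d / 2 - real t) \<longrightarrow> hamiltonian_on E S)"

end

theory Submission
  imports Defs "HOL-Probability.Hoeffding"
begin


lemma sum_pow_card:
  fixes r :: real
  assumes "finite K"
  shows "(\<Sum>T\<in>Pow K. r ^ card T) = (r + 1) ^ card K"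
proof -
  have "(\<Prod>x\<in>K. r + 1) = (\<Sum>X\<in>Pow K. (\<Prod>x\<in>X. r) * (\<Prod>x\<in>K-X. 1))"
    by (rule prod_add[OF assms])
  then show ?thesis by simp
qed

lemma hoeff_aux:
  fixes l :: real assumes "l \<ge> 0"
  shows "1 + exp (-l) \<le> 2 * exp (-l/2 + l^2/8)"
proof -
  have "-l * (1/2) + ln (1 + (1/2) * (exp l - 1)) \<le> l^2/8"
    using Hoeffdings_lemma_aux[of l "1/2"] assms by simp
  moreover have eq: "1 + (1/2) * (exp l - 1) = (1 + exp l) / 2" by (simp add: field_simps)
  moreover have pos: "(1 + exp l) / 2 > 0" using exp_gt_zero[of l] by (simp add: add_pos_pos)
  ultimately have "ln ((1 + exp l) / 2) \<le> l/2 + l^2/8" by (simp only:)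
  hence "(1 + exp l) / 2 \<le> exp (l/2 + l^2/8)"
    using pos by (metis exp_le_cancel_iff exp_ln)
  hence "(1 + exp l) \<le> 2 * exp (l/2 + l^2/8)" by simp
  hence "exp (-l) * (1 + exp l) \<le> exp (-l) * (2 * exp (l/2 + l^2/8))"
    by (intro mult_left_mono) auto
  also have "exp (-l) * (1 + exp l) = 1 + exp (-l)"
    by (simp add: algebra_simps flip: exp_add)
  also have "exp (-l) * (2 * exp (l/2 + l^2/8)) = 2 * exp (-l/2 + l^2/8)"
    by (simp add: algebra_simps flip: exp_add)
  finally show ?thesis .
qed

lemma chernoff:
  fixes K :: "'a set" and s :: real
  assumes "finite K" "card K > 0" "s > 0"
  shows "real (card {T \<in> Pow K. real (card T) < real (card K)/2 - s}) \<le> 2 ^ card K * exp (- 2 * s ^ 2 / real (card K))"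
proof -
  define m where "m = real (card K)"
  have m: "m > 0" using assms m_def by simp
  define l where "l = 4 * s / m"
  have l: "l \<ge> 0" using m assms l_def by simp
  define c where "c = m / 2 - s"
  have "real (card {T \<in> Pow K. real (card T) < c}) = (\<Sum>T\<in>{T \<in> Pow K. real (card T) < c}. 1)"
    by simp
  also have "\<dots> \<le> (\<Sum>T\<in>{T \<in> Pow K. real (card T) < c}. exp (l * (c - card T)))"
    using l by (intro sum_mono) auto
  also have "\<dots> \<le> (\<Sum>T\<in>Pow K. exp (l * (c - card T)))"
    using assms by (intro sum_mono2) auto
  also have "\<dots> = (\<Sum>T\<in>Pow K. exp (l*c) * exp (-l) ^ card T)"
    by (intro sum.cong refl) (simp add: algebra_simps flip: exp_add exp_of_nat_mult)
  also have "\<dots> = exp (l*c) * (exp (-l) + 1) ^ card K"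
    by (simp add: sum_distrib_left[symmetric] sum_pow_card assms)
  also have "\<dots> \<le> exp (l*c) * (2 * exp (-l/2 + l^2/8)) ^ card K"
    using hoeff_aux[OF l] by (intro mult_left_mono power_mono) (auto simp: add.commute)
  also have "\<dots> = 2 ^ card K * exp (l*c + m * (-l/2 + l^2/8))"
    by (simp add: m_def power_mult_distrib exp_add flip: exp_of_nat_mult)
  also have "l*c + m * (-l/2 + l^2/8) = - 2 * s ^ 2 / m"
    using m by (simp add: l_def c_def field_simps power2_eq_square)
  finally show ?thesis by (simp add: c_def m_def)
qed




lemma lll_const:
  fixes D :: nat and p :: real
  assumes "D \<ge> 1" "exp 1 * p * (D + 1) \<le> 1"
  shows "p \<le> (1 / (D+1)) * (1 - 1/(D+1)) ^ D"
proof -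
  have D: "real D \<ge> 1" using assms by simp
  have "1 + 1 / real D \<le> exp (1 / real D)" by (rule exp_ge_add_one_self_aux) simp
  hence "(1 + 1 / real D) ^ D \<le> exp (1 / real D) ^ D" by (intro power_mono) auto
  also have "\<dots> = exp 1" using D by (simp flip: exp_of_nat_mult)
  finally have e: "(1 + 1 / real D) ^ D \<le> exp 1" .
  have eq: "1 - 1/(real D+1) = 1 / (1 + 1 / real D)" using D by (simp add: field_simps)
  have "1 / real D \<ge> 0" by simp
  hence "1 + 1 / real D > 0" by linarith
  hence pos: "(1 + 1 / real D) ^ D > 0" by (rule zero_less_power)
  have "(1 - 1/(real D+1)) ^ D = 1 / (1 + 1 / real D) ^ D" by (simp add: eq power_one_over)
  also have "\<dots> \<ge> 1 / exp 1" using e pos by (intro divide_left_mono) auto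
  finally have h: "(1 - 1/(real D+1)) ^ D \<ge> 1 / exp 1" .
  have c: "exp 1 * (D+1) > 0" by simp
  have "p * (exp 1 * (D+1)) \<le> 1" using assms(2) by (simp add: algebra_simps)
  hence "p \<le> 1 / (exp 1 * (D+1))" using c by (simp add: pos_le_divide_eq)
  also have "\<dots> = (1 / (D+1)) * (1 / exp 1)" by simp
  also have "\<dots> \<le> (1 / (D+1)) * (1 - 1/(D+1)) ^ D" using h by (intro mult_left_mono) (auto simp: add.commute)
  finally show ?thesis .
qed

lemma LLL:
  fixes \<Omega> :: "'b set" and I :: "'i set" and A :: "'i \<Rightarrow> 'b set" and G :: "'i \<Rightarrow> 'i set"
    and D :: nat and p :: real
  assumes fin: "finite \<Omega>" "\<Omega> \<noteq> {}" "finite I"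
    and dep: "\<And>v. v \<in> I \<Longrightarrow> card (G v \<inter> I) \<le> D"
    and indep: "\<And>v S. v \<in> I \<Longrightarrow> S \<subseteq> I - G v - {v} \<Longrightarrow>
       real (card {\<omega>\<in>\<Omega>. \<omega> \<in> A v \<and> (\<forall>w\<in>S. \<omega> \<notin> A w)}) \<le> p * real (card {\<omega>\<in>\<Omega>. \<forall>w\<in>S. \<omega> \<notin> A w})"
    and D1: "D \<ge> 1"
    and pD: "exp 1 * p * (D + 1) \<le> 1"
  shows "\<exists>\<omega>\<in>\<Omega>. \<forall>v\<in>I. \<omega> \<notin> A v"
proof -
  define Nf where "Nf S = real (card {\<omega>\<in>\<Omega>. \<forall>w\<in>S. \<omega> \<notin> A w})" for S
  define M where "M v S = real (card {\<omega>\<in>\<Omega>. \<omega> \<in> A v \<and> (\<forall>w\<in>S. \<omega> \<notin> A w)})" for v S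
  define x :: real where "x = 1 / (D+1)"
  have x0: "0 \<le> x" and x1: "x \<le> 1/2" using D1 by (auto simp: x_def field_simps)
  have px: "p \<le> x * (1 - x) ^ D" unfolding x_def by (rule lll_const[OF D1 pD])
  have ins: "Nf (insert w S) = Nf S - M w S" if "w \<notin> S" for w S
  proof -
    have "{\<omega>\<in>\<Omega>. \<forall>u\<in>insert w S. \<omega> \<notin> A u} = {\<omega>\<in>\<Omega>. \<forall>u\<in>S. \<omega> \<notin> A u} - {\<omega>\<in>\<Omega>. \<omega> \<in> A w \<and> (\<forall>u\<in>S. \<omega> \<notin> A u)}"
      by auto
    moreover have "card ({\<omega>\<in>\<Omega>. \<forall>u\<in>S. \<omega> \<notin> A u} - {\<omega>\<in>\<Omega>. \<omega> \<in> A w \<and> (\<forall>u\<in>S. \<omega> \<notin> A u)})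
       = card {\<omega>\<in>\<Omega>. \<forall>u\<in>S. \<omega> \<notin> A u} - card {\<omega>\<in>\<Omega>. \<omega> \<in> A w \<and> (\<forall>u\<in>S. \<omega> \<notin> A u)}"
      by (rule card_Diff_subset) (use fin in auto)
    moreover have "card {\<omega>\<in>\<Omega>. \<omega> \<in> A w \<and> (\<forall>u\<in>S. \<omega> \<notin> A u)} \<le> card {\<omega>\<in>\<Omega>. \<forall>u\<in>S. \<omega> \<notin> A u}"
      by (rule card_mono) (use fin in auto)
    ultimately show ?thesis unfolding Nf_def M_def by (simp add: of_nat_diff)
  qed
  have Mge: "M v S \<ge> 0" for v S unfolding M_def by simp
  have claim: "S \<subseteq> I \<longrightarrow> (Nf S > 0 \<and> (\<forall>v\<in>I - S. M v S \<le> x * Nf S))" for S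
  proof (induction "card S" arbitrary: S rule: less_induct)
    case less
    show ?case
    proof
      assume SI: "S \<subseteq> I"
      have finS: "finite S" using SI fin(3) finite_subset by blast
      have IH: "\<And>S'. S' \<subset> S \<Longrightarrow> Nf S' > 0 \<and> (\<forall>v\<in>I - S'. M v S' \<le> x * Nf S')"
        using less SI finS by (meson psubset_card_mono psubset_imp_subset subset_trans)
      have pos: "Nf S > 0"
      proof (cases "S = {}")
        case True
        then show ?thesis using fin by (simp add: Nf_def card_gt_0_iff)
      next
        case False
        then obtain w where w: "w \<in> S" by blast
        have S': "S - {w} \<subset> S" using w by blast
        have "S = insert w (S - {w})" using w by blast
        hence "Nf S = Nf (S - {w}) - M w (S - {w})" using ins[of w "S - {w}"] by simp
        moreover have "M w (S - {w}) \<le> x * Nf (S - {w})" using IH[OF S'] w SI by auto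
        moreover have "Nf (S - {w}) > 0" using IH[OF S'] by auto
        moreover have "x * Nf (S - {w}) \<le> (1/2) * Nf (S - {w})"
          using x1 \<open>Nf (S - {w}) > 0\<close> by (intro mult_right_mono) auto
        ultimately show ?thesis by linarith
      qed
      have "M v S \<le> x * Nf S" if v: "v \<in> I - S" for v
      proof -
        define S1 where "S1 = S \<inter> G v"
        define S2 where "S2 = S - G v"
        have finS1: "finite S1" using finS S1_def by simp
        have chain: "T \<subseteq> S1 \<longrightarrow> Nf (S2 \<union> T) \<ge> (1 - x) ^ card T * Nf S2" for T
        proof (induction T rule: infinite_finite_induct)
          case (infinite A)
          then show ?case using finS1 finite_subset by blast
        next
          case empty
          then show ?case by simp
        next
          case (insert w T)
          show ?case
          proof
            assume sub: "insert w T \<subseteq> S1"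
            have IHT: "(1 - x) ^ card T * Nf S2 \<le> Nf (S2 \<union> T)" using insert sub by auto
            have wS2: "w \<notin> S2 \<union> T" using insert sub by (auto simp: S1_def S2_def)
            have psub: "S2 \<union> T \<subset> S" using sub wS2 by (auto simp: S1_def S2_def)
            have "M w (S2 \<union> T) \<le> x * Nf (S2 \<union> T)"
              using IH[OF psub] wS2 sub SI by (auto simp: S1_def)
            moreover have "Nf (S2 \<union> insert w T) = Nf (S2 \<union> T) - M w (S2 \<union> T)"
              using ins[OF wS2] by simp
            ultimately have "Nf (S2 \<union> insert w T) \<ge> (1 - x) * Nf (S2 \<union> T)" by (simp add: algebra_simps)
            moreover have "(1 - x) * Nf (S2 \<union> T) \<ge> (1 - x) * ((1 - x) ^ card T * Nf S2)"
              using IHT x1 by (intro mult_left_mono) auto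
            ultimately show "Nf (S2 \<union> insert w T) \<ge> (1 - x) ^ card (insert w T) * Nf S2"
              using insert by (simp add: algebra_simps)
          qed
        qed
        have NS: "Nf S \<ge> (1 - x) ^ card S1 * Nf S2"
          using chain[of S1] by (simp add: S1_def S2_def Un_Diff_Int)
        have "card S1 \<le> card (G v \<inter> I)"
          using SI fin by (intro card_mono) (auto simp: S1_def)
        hence "card S1 \<le> D" using dep v by force
        hence "(1 - x) ^ D \<le> (1 - x) ^ card S1" using x0 x1 by (intro power_decreasing) auto
        have "M v S \<le> M v S2" unfolding M_def
          by (intro of_nat_mono card_mono) (use fin in \<open>auto simp: S2_def\<close>)
        also have "\<dots> \<le> p * Nf S2" unfolding M_def Nf_def
          using v SI by (intro indep) (auto simp: S2_def)
        also have "\<dots> \<le> x * (1 - x) ^ D * Nf S2"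
          using px by (intro mult_right_mono) (auto simp: Nf_def)
        also have "\<dots> \<le> x * ((1 - x) ^ card S1 * Nf S2)"
          using \<open>(1 - x) ^ D \<le> (1 - x) ^ card S1\<close> x0 by (simp add: mult.assoc mult_left_mono mult_right_mono Nf_def)
        also have "\<dots> \<le> x * Nf S" using NS x0 by (intro mult_left_mono) auto
        finally show ?thesis .
      qed
      then show "Nf S > 0 \<and> (\<forall>v\<in>I - S. M v S \<le> x * Nf S)" using pos by blast
    qed
  qed
  have "Nf I > 0" using claim[of I] by simp
  then have "{\<omega>\<in>\<Omega>. \<forall>w\<in>I. \<omega> \<notin> A w} \<noteq> {}" unfolding Nf_def by (metis card.empty of_nat_0 less_irrefl)
  then show ?thesis by blast
qed




lemma card_split_key:
  assumes "finite X"
  shows "card {\<omega>\<in>X. Q \<omega>} = (\<Sum>\<kappa>\<in>f ` X. card {\<omega>\<in>X. f \<omega> = \<kappa> \<and> Q \<omega>})"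
proof -
  have "{\<omega>\<in>X. Q \<omega>} = (\<Union>\<kappa>\<in>f ` X. {\<omega>\<in>X. f \<omega> = \<kappa> \<and> Q \<omega>})" by auto
  moreover have "card (\<Union>\<kappa>\<in>f ` X. {\<omega>\<in>X. f \<omega> = \<kappa> \<and> Q \<omega>}) = (\<Sum>\<kappa>\<in>f ` X. card {\<omega>\<in>X. f \<omega> = \<kappa> \<and> Q \<omega>})"
    by (rule card_UN_disjoint) (use assms in auto)
  ultimately show ?thesis by simp
qed

lemma fiber_bound:
  fixes \<Omega> :: "'b set" and f :: "'b \<Rightarrow> 'c" and A B :: "'b set" and p :: real
  assumes fin: "finite \<Omega>"
    and Bc: "\<And>\<omega> \<omega>'. \<omega> \<in> \<Omega> \<Longrightarrow> \<omega>' \<in> \<Omega> \<Longrightarrow> f \<omega> = f \<omega>' \<Longrightarrow> \<omega> \<in> B \<Longrightarrow> \<omega>' \<in> B"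
    and fib: "\<And>\<omega>. \<omega> \<in> \<Omega> \<Longrightarrow> real (card {\<omega>'\<in>\<Omega>. f \<omega>' = f \<omega> \<and> \<omega>' \<in> A}) \<le> p * real (card {\<omega>'\<in>\<Omega>. f \<omega>' = f \<omega>})"
  shows "real (card {\<omega>\<in>\<Omega>. \<omega> \<in> A \<and> \<omega> \<in> B}) \<le> p * real (card {\<omega>\<in>\<Omega>. \<omega> \<in> B})"
proof -
  define X where "X = {\<omega>\<in>\<Omega>. \<omega> \<in> B}"
  have fX: "finite X" using fin X_def by simp
  have e1: "{\<omega>\<in>\<Omega>. \<omega> \<in> A \<and> \<omega> \<in> B} = {\<omega>\<in>X. \<omega> \<in> A}" by (auto simp: X_def)
  have e2: "{\<omega>\<in>\<Omega>. \<omega> \<in> B} = {\<omega>\<in>X. True}" by (auto simp: X_def)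
  have fibeq: "{\<omega>\<in>X. f \<omega> = \<kappa> \<and> Q \<omega>} = {\<omega>\<in>\<Omega>. f \<omega> = \<kappa> \<and> Q \<omega>}" if kX: "\<kappa> \<in> f ` X" for \<kappa> Q
  proof -
    obtain \<omega>0 where w0: "\<omega>0 \<in> \<Omega>" "\<omega>0 \<in> B" "\<kappa> = f \<omega>0" using kX by (auto simp: X_def)
    have "\<omega> \<in> B" if "\<omega> \<in> \<Omega>" "f \<omega> = \<kappa>" for \<omega>
      using Bc[of \<omega>0 \<omega>] w0 that by simp
    then show ?thesis by (auto simp: X_def)
  qed
  have "real (card {\<omega>\<in>X. \<omega> \<in> A}) = (\<Sum>\<kappa>\<in>f ` X. real (card {\<omega>\<in>\<Omega>. f \<omega> = \<kappa> \<and> \<omega> \<in> A}))"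
    using card_split_key[OF fX, of "\<lambda>\<omega>. \<omega> \<in> A" f] fibeq by simp
  also have "\<dots> \<le> (\<Sum>\<kappa>\<in>f ` X. p * real (card {\<omega>\<in>\<Omega>. f \<omega> = \<kappa> \<and> True}))"
  proof (intro sum_mono)
    fix \<kappa> assume "\<kappa> \<in> f ` X"
    then obtain \<omega> where "\<omega> \<in> X" "\<kappa> = f \<omega>" by blast
    then show "real (card {\<omega>\<in>\<Omega>. f \<omega> = \<kappa> \<and> \<omega> \<in> A}) \<le> p * real (card {\<omega>\<in>\<Omega>. f \<omega> = \<kappa> \<and> True})"
      using fib[of \<omega>] \<open>\<omega> \<in> X\<close> by (simp add: X_def)
  qed
  also have "\<dots> = p * real (card {\<omega>\<in>X. True})"
  proof -
    have fibeq1: "{\<omega>\<in>X. f \<omega> = \<kappa>} = {\<omega>\<in>\<Omega>. f \<omega> = \<kappa>}" if "\<kappa> \<in> f ` X" for \<kappa>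
      using fibeq[OF that, of "\<lambda>_. True"] by simp
    have "real (card {\<omega>\<in>X. True}) = (\<Sum>\<kappa>\<in>f ` X. real (card {\<omega>\<in>\<Omega>. f \<omega> = \<kappa>}))"
      using card_split_key[OF fX, of "\<lambda>_. True" f] fibeq1 by simp
    then show ?thesis by (simp add: sum_distrib_left)
  qed
  finally show ?thesis using e1 e2 by simp
qed




definition sel :: "('a \<times> 'a) set \<Rightarrow> 'a \<times> 'a \<Rightarrow> 'a" where
  "sel R p = (if p \<in> R then fst p else snd p)"

locale step_setup =
  fixes V :: "'a set" and E' :: "'a \<Rightarrow> 'a \<Rightarrow> bool" and J :: "('a \<times> 'a) set" and Z :: "'a set"
  assumes finV: "finite V"
    and pairs: "\<And>p. p \<in> J \<Longrightarrow> fst p \<in> V \<and> snd p \<in> V \<and> fst p \<noteq> snd p"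
    and disj: "\<And>p q. p \<in> J \<Longrightarrow> q \<in> J \<Longrightarrow> p \<noteq> q \<Longrightarrow> {fst p, snd p} \<inter> {fst q, snd q} = {}"
    and ZV: "Z \<subseteq> V"
    and Zdisj: "\<And>p. p \<in> J \<Longrightarrow> fst p \<notin> Z \<and> snd p \<notin> Z"
    and cover: "V \<subseteq> Z \<union> (\<Union>p\<in>J. {fst p, snd p})"
begin

lemma finJ: "finite J"
proof -
  have "J \<subseteq> V \<times> V" using pairs by (auto simp: mem_Times_iff)
  then show ?thesis using finV finite_subset by blast
qed

lemma finZ: "finite Z" using ZV finV finite_subset by blast

lemma sel_in: "p \<in> J \<Longrightarrow> sel R p \<in> {fst p, snd p}" by (simp add: sel_def)

lemma sel_inj: "inj_on (sel R) J"
proof (rule inj_onI)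
  fix p q assume "p \<in> J" "q \<in> J" "sel R p = sel R q"
  then have sp: "sel R p \<in> {fst p, snd p} \<inter> {fst q, snd q}" using sel_in[of p R] sel_in[of q R] by auto
  show "p = q"
  proof (rule ccontr)
    assume "p \<noteq> q"
    then have "{fst p, snd p} \<inter> {fst q, snd q} = {}" using disj \<open>p \<in> J\<close> \<open>q \<in> J\<close> by blast
    then show False using sp by blast
  qed
qed

definition Nb :: "'a \<Rightarrow> 'a set" where "Nb v = {u\<in>V. E' v u}"
definition Kp :: "'a \<Rightarrow> ('a \<times> 'a) set" where "Kp v = {p\<in>J. (fst p \<in> Nb v) \<noteq> (snd p \<in> Nb v)}"
definition J2 :: "'a \<Rightarrow> ('a \<times> 'a) set" where "J2 v = {p\<in>J. fst p \<in> Nb v \<and> snd p \<in> Nb v}"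
definition Tp :: "'a \<Rightarrow> ('a \<times> 'a) set \<Rightarrow> ('a \<times> 'a) set" where
  "Tp v R = {p\<in>Kp v. (p \<in> R) = (fst p \<in> Nb v)}"

lemma finNb: "finite (Nb v)" using finV by (simp add: Nb_def)
lemma finKp: "finite (Kp v)" using finJ by (simp add: Kp_def)

lemma card_Nb_le: "card (Nb v) \<le> card (Nb v \<inter> Z) + 2 * card (J2 v) + card (Kp v)"
proof -
  define P where "P = (\<Union>p\<in>Kp v. Nb v \<inter> {fst p, snd p})"
  have sub: "Nb v \<subseteq> (Nb v \<inter> Z) \<union> (fst ` J2 v \<union> snd ` J2 v) \<union> P"
  proof
    fix u assume u: "u \<in> Nb v"
    then have "u \<in> V" by (simp add: Nb_def)
    then have "u \<in> Z \<or> (\<exists>p\<in>J. u \<in> {fst p, snd p})" using cover by auto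
    then show "u \<in> (Nb v \<inter> Z) \<union> (fst ` J2 v \<union> snd ` J2 v) \<union> P"
    proof
      assume "u \<in> Z" then show ?thesis using u by auto
    next
      assume "\<exists>p\<in>J. u \<in> {fst p, snd p}"
      then obtain p where p: "p \<in> J" "u \<in> {fst p, snd p}" by blast
      show ?thesis
      proof (cases "fst p \<in> Nb v \<and> snd p \<in> Nb v")
        case True
        then have "p \<in> J2 v" using p by (simp add: J2_def)
        then show ?thesis using p by (auto intro: rev_image_eqI)
      next
        case False
        then have "p \<in> Kp v" using p u by (auto simp: Kp_def)
        then show ?thesis using p u by (auto simp: P_def)
      qed
    qed
  qed
  have fin2: "finite (J2 v)" using finJ by (simp add: J2_def)
  have "card (Nb v) \<le> card ((Nb v \<inter> Z) \<union> (fst ` J2 v \<union> snd ` J2 v) \<union> P)"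
    by (intro card_mono[OF _ sub]) (simp add: P_def finZ fin2 finKp finNb)
  also have "\<dots> \<le> card (Nb v \<inter> Z) + (card (fst ` J2 v) + card (snd ` J2 v)) + card P"
    by (meson card_Un_le add_le_mono le_refl order_trans)
  also have "card (fst ` J2 v) \<le> card (J2 v)" by (rule card_image_le[OF fin2])
  also have "card (snd ` J2 v) \<le> card (J2 v)" by (rule card_image_le[OF fin2])
  also have "card P \<le> (\<Sum>p\<in>Kp v. card (Nb v \<inter> {fst p, snd p}))"
    unfolding P_def by (rule card_UN_le[OF finKp])
  also have "\<dots> = (\<Sum>p\<in>Kp v. 1)"
  proof (intro sum.cong refl)
    fix p assume "p \<in> Kp v"
    then have "(fst p \<in> Nb v) \<noteq> (snd p \<in> Nb v)" by (simp add: Kp_def)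
    then show "card (Nb v \<inter> {fst p, snd p}) = 1"
      by (cases "fst p \<in> Nb v") (auto simp: Int_insert_right)
  qed
  finally show ?thesis by simp
qed

lemma card_S_ge: "card (Nb v \<inter> Z) + card (J2 v) + card (Tp v R) \<le> card (Nb v \<inter> (Z \<union> sel R ` J))"
proof -
  have fin2: "finite (J2 v)" using finJ by (simp add: J2_def)
  have finT: "finite (Tp v R)" using finKp by (simp add: Tp_def)
  have J2J: "J2 v \<subseteq> J" and TJ: "Tp v R \<subseteq> J" by (auto simp: J2_def Tp_def Kp_def)
  have d1: "(Nb v \<inter> Z) \<inter> (sel R ` J2 v \<union> sel R ` Tp v R) = {}"
  proof -
    have selZ: "\<And>p. p \<in> J \<Longrightarrow> sel R p \<notin> Z" using Zdisj by (simp add: sel_def)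
    then show ?thesis using J2J TJ by blast
  qed
  have d2: "sel R ` J2 v \<inter> sel R ` Tp v R = {}"
  proof -
    have "J2 v \<inter> Tp v R = {}" by (auto simp: J2_def Tp_def Kp_def)
    then show ?thesis using inj_on_image_Int[OF sel_inj J2J TJ] by simp
  qed
  have c1: "card (sel R ` J2 v) = card (J2 v)" using inj_on_subset[OF sel_inj J2J] by (simp add: card_image)
  have c2: "card (sel R ` Tp v R) = card (Tp v R)" using inj_on_subset[OF sel_inj TJ] by (simp add: card_image)
  have "card ((Nb v \<inter> Z) \<union> (sel R ` J2 v \<union> sel R ` Tp v R)) = card (Nb v \<inter> Z) + (card (J2 v) + card (Tp v R))"
    using d1 d2 c1 c2 finZ fin2 finT by (simp add: card_Un_disjoint)
  moreover have "(Nb v \<inter> Z) \<union> (sel R ` J2 v \<union> sel R ` Tp v R) \<subseteq> Nb v \<inter> (Z \<union> sel R ` J)"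
  proof -
    have "sel R ` J2 v \<subseteq> Nb v" by (auto simp: J2_def sel_def)
    moreover have "sel R ` Tp v R \<subseteq> Nb v" by (auto simp: Tp_def Kp_def sel_def)
    ultimately show ?thesis using J2J TJ by blast
  qed
  moreover have "finite (Nb v \<inter> (Z \<union> sel R ` J))" using finNb by simp
  ultimately have "card ((Nb v \<inter> Z) \<union> (sel R ` J2 v \<union> sel R ` Tp v R)) \<le> card (Nb v \<inter> (Z \<union> sel R ` J))"
    by (intro card_mono) auto
  then show ?thesis using \<open>card ((Nb v \<inter> Z) \<union> (sel R ` J2 v \<union> sel R ` Tp v R)) = _\<close> by linarith
qed

end

lemma card_pred_bij:
  assumes "bij_betw f A B"
  shows "card {a\<in>A. P (f a)} = card {b\<in>B. P b}"
proof -
  have e: "f ` {a\<in>A. P (f a)} = {b\<in>B. P b}" using assms by (auto simp: bij_betw_def)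
  have i: "inj_on f {a\<in>A. P (f a)}" using assms by (auto simp: bij_betw_def inj_on_def)
  show ?thesis using card_image[OF i] e by simp
qed

locale step_full = step_setup +
  fixes d t \<Delta> :: nat
  assumes sym: "\<And>u v. E' u v \<Longrightarrow> E' v u"
    and degmin: "\<And>v. v \<in> V \<Longrightarrow> d \<le> card (Nb v)"
    and degmax: "\<And>v. v \<in> V \<Longrightarrow> card (Nb v) \<le> \<Delta>"
    and t0: "0 < t" and td: "2 * t \<le> d"
    and hyp: "exp 1 * (2 * real \<Delta> ^ 2 + 1) \<le> exp (real t ^ 2 / (2 * real d))"
    and Vne: "V \<noteq> {}"
begin

definition sv :: "'a \<Rightarrow> real" where "sv v = (real (card (Nb v)) - real d) / 2 + real t"
definition Ev :: "'a \<Rightarrow> ('a \<times> 'a) set set" where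
  "Ev v = {R. real (card (Tp v R)) < real (card (Kp v)) / 2 - sv v}"

lemma good:
  assumes "R \<notin> Ev v"
  shows "real d / 2 - real t \<le> real (card (Nb v \<inter> (Z \<union> sel R ` J)))"
proof -
  have 1: "real (card (Nb v)) \<le> real (card (Nb v \<inter> Z)) + 2 * real (card (J2 v)) + real (card (Kp v))"
    using card_Nb_le[of v] by linarith
  have 2: "real (card (Nb v \<inter> Z)) + real (card (J2 v)) + real (card (Tp v R)) \<le> real (card (Nb v \<inter> (Z \<union> sel R ` J)))"
    using card_S_ge[of v R] by linarith
  have 3: "real (card (Tp v R)) \<ge> real (card (Kp v)) / 2 - sv v" using assms by (simp add: Ev_def)
  have 4: "2 * real (card (Tp v R)) \<ge> real (card (Kp v)) - real (card (Nb v)) + real d - 2 * real t"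
    using 3 unfolding sv_def by (simp add: field_simps)
  have 5: "2 * real (card (Nb v \<inter> (Z \<union> sel R ` J))) \<ge> real d - 2 * real t"
    using 1 2 4 by (simp add: algebra_simps)
  then show ?thesis by (simp add: field_simps)
qed

lemma Kp_le: "card (Kp v) \<le> card (Nb v)"
proof -
  define g where "g p = (if fst p \<in> Nb v then fst p else snd p)" for p :: "'a \<times> 'a"
  have gi: "p \<in> Kp v \<Longrightarrow> g p \<in> {fst p, snd p} \<and> g p \<in> Nb v" for p by (auto simp: g_def Kp_def)
  have "inj_on g (Kp v)"
  proof (rule inj_onI)
    fix p q assume pq: "p \<in> Kp v" "q \<in> Kp v" "g p = g q"
    have "g p \<in> {fst p, snd p}" using gi pq(1) by blast
    moreover have "g q \<in> {fst q, snd q}" using gi pq(2) by blast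
    ultimately have sp: "g p \<in> {fst p, snd p} \<inter> {fst q, snd q}" using pq(3) by simp
    show "p = q"
    proof (rule ccontr)
      assume "p \<noteq> q"
      then have "{fst p, snd p} \<inter> {fst q, snd q} = {}" using disj pq by (auto simp: Kp_def)
      then show False using sp by blast
    qed
  qed
  moreover have "g ` Kp v \<subseteq> Nb v" using gi by auto
  ultimately show ?thesis using finNb by (metis card_image card_mono)
qed

lemma s_pos: "v \<in> V \<Longrightarrow> sv v \<ge> real t"
  using degmin[of v] by (simp add: sv_def)

lemma exp_bound:
  assumes v: "v \<in> V" and K: "card (Kp v) > 0"
  shows "exp (- 2 * sv v ^ 2 / real (card (Kp v))) \<le> exp (- (real t ^ 2 / (2 * real d)))"
proof -
  define n where "n = real (card (Nb v))"
  define k where "k = real (card (Kp v))"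
  define x where "x = n - real d"
  have x0: "x \<ge> 0" using degmin[OF v] by (simp add: x_def n_def)
  have kn: "k \<le> n" using Kp_le by (simp add: k_def n_def)
  have k0: "k > 0" using K by (simp add: k_def)
  have dpos: "real d > 0" using t0 td by simp
  have t4d: "4 * real d - real t \<ge> 0" using td by simp
  have s: "2 * sv v = x + 2 * real t" by (simp add: sv_def x_def n_def)
  have key: "real t ^ 2 * n \<le> (2 * sv v) ^ 2 * real d"
  proof -
    have "(2 * sv v) ^ 2 * real d - real t ^ 2 * n = x^2 * real d + x * real t * (4 * real d - real t) + 3 * real t ^ 2 * real d"
      unfolding s by (simp add: x_def power2_eq_square algebra_simps)
    moreover have "x^2 * real d \<ge> 0" using dpos by simp
    moreover have "x * real t * (4 * real d - real t) \<ge> 0" using x0 t4d by simp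
    moreover have "3 * real t ^ 2 * real d \<ge> 0" using dpos by simp
    ultimately show ?thesis by linarith
  qed
  have "real t ^ 2 / (2 * real d) \<le> 2 * sv v ^ 2 / n"
    using key dpos k0 kn by (simp add: field_simps power2_eq_square)
  also have "\<dots> \<le> 2 * sv v ^ 2 / k"
    using k0 kn by (intro divide_left_mono) auto
  finally show ?thesis by (simp add: k_def)
qed

definition pr :: real where "pr = exp (- (real t ^ 2 / (2 * real d)))"

lemma fiber_count:
  assumes v: "v \<in> V" and R0: "R0 \<subseteq> J"
  shows "real (card {R\<in>Pow J. R - Kp v = R0 - Kp v \<and> R \<in> Ev v}) \<le> pr * real (card {R\<in>Pow J. R - Kp v = R0 - Kp v})"
proof -
  define K where "K = Kp v"
  define F where "F = {R\<in>Pow J. R - K = R0 - K}"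
  define psi where "psi X = (R0 - K) \<union> {p\<in>K. (p \<in> X) = (fst p \<in> Nb v)}" for X
  have KJ: "K \<subseteq> J" by (auto simp: K_def Kp_def)
  have bij: "bij_betw (Tp v) F (Pow K)"
  proof (rule bij_betw_byWitness[where f' = psi])
    have memT: "p \<in> Tp v R \<longleftrightarrow> p \<in> K \<and> ((p \<in> R) = (fst p \<in> Nb v))" for p R
      by (simp add: Tp_def K_def)
    have mempsi: "p \<in> psi X \<longleftrightarrow> (p \<in> R0 \<and> p \<notin> K) \<or> (p \<in> K \<and> ((p \<in> X) = (fst p \<in> Nb v)))" for p X
      by (simp add: psi_def)
    show "\<forall>R\<in>F. psi (Tp v R) = R"
    proof
      fix R assume "R \<in> F"
      then have RF: "R - K = R0 - K" by (simp add: F_def)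
      show "psi (Tp v R) = R"
      proof (rule set_eqI)
        fix p
        have pt: "(p \<in> R \<and> p \<notin> K) = (p \<in> R0 \<and> p \<notin> K)" using RF by blast
        show "p \<in> psi (Tp v R) \<longleftrightarrow> p \<in> R"
        proof (cases "p \<in> K")
          case True
          then show ?thesis using mempsi[of p "Tp v R"] memT[of p R] by (cases "fst p \<in> Nb v") simp_all
        next
          case False
          then show ?thesis using mempsi[of p "Tp v R"] pt by simp
        qed
      qed
    qed
    show "\<forall>X\<in>Pow K. Tp v (psi X) = X"
    proof
      fix X assume "X \<in> Pow K"
      then have XK: "X \<subseteq> K" by simp
      show "Tp v (psi X) = X"
      proof (rule set_eqI)
        fix p
        show "p \<in> Tp v (psi X) \<longleftrightarrow> p \<in> X"
          unfolding mempsi memT using XK by (cases "p \<in> K"; cases "p \<in> X"; cases "fst p \<in> Nb v") auto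
      qed
    qed
    show "Tp v ` F \<subseteq> Pow K" by (auto simp: Tp_def K_def)
    show "psi ` Pow K \<subseteq> F" using R0 KJ by (auto simp: psi_def F_def)
  qed
  have finK: "finite K" using finKp by (simp add: K_def)
  have cF: "card F = 2 ^ card K" using bij finK by (metis bij_betw_same_card card_Pow)
  have "{R\<in>Pow J. R - Kp v = R0 - Kp v \<and> R \<in> Ev v} = {R\<in>F. real (card (Tp v R)) < real (card K) / 2 - sv v}"
    by (auto simp: F_def K_def Ev_def)
  also have "card \<dots> = card {X\<in>Pow K. real (card X) < real (card K) / 2 - sv v}"
    by (rule card_pred_bij[OF bij])
  finally have c1: "card {R\<in>Pow J. R - Kp v = R0 - Kp v \<and> R \<in> Ev v} = card {X\<in>Pow K. real (card X) < real (card K) / 2 - sv v}" .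
  have sp: "sv v > 0" using s_pos[OF v] t0 by simp
  show ?thesis
  proof (cases "card K = 0")
    case True
    then have e: "{X\<in>Pow K. real (card X) < real (card K) / 2 - sv v} = {}" using sp by auto
    have "card {R\<in>Pow J. R - Kp v = R0 - Kp v \<and> R \<in> Ev v} = 0" by (simp only: c1 e card.empty)
    moreover have "pr \<ge> 0" by (simp add: pr_def)
    ultimately show ?thesis by simp
  next
    case False
    have "real (card {X\<in>Pow K. real (card X) < real (card K) / 2 - sv v}) \<le> 2 ^ card K * exp (- 2 * sv v ^ 2 / real (card K))"
      using chernoff[OF finK _ sp] False by simp
    also have "\<dots> \<le> 2 ^ card K * pr"
      using exp_bound[OF v] False by (intro mult_left_mono) (auto simp: K_def pr_def)
    finally have h: "real (card {X\<in>Pow K. real (card X) < real (card K) / 2 - sv v}) \<le> 2 ^ card K * pr" .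
    have cF': "card {R\<in>Pow J. R - Kp v = R0 - Kp v} = 2 ^ card K" using cF unfolding F_def K_def .
    have eq: "pr * real (2 ^ card K) = 2 ^ card K * pr" by (simp add: mult.commute)
    show ?thesis unfolding c1 cF' using h eq by linarith
  qed
qed


lemma dep_bound:
  assumes v: "v \<in> V"
  shows "card ({w. Kp w \<inter> Kp v \<noteq> {}} \<inter> V) \<le> 2 * \<Delta> ^ 2"
proof -
  have sub: "{w. Kp w \<inter> Kp v \<noteq> {}} \<inter> V \<subseteq> (\<Union>p\<in>Kp v. Nb (fst p) \<union> Nb (snd p))"
  proof
    fix w assume "w \<in> {w. Kp w \<inter> Kp v \<noteq> {}} \<inter> V"
    then obtain p where p: "p \<in> Kp w" "p \<in> Kp v" and w: "w \<in> V" by blast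
    then have "fst p \<in> Nb w \<or> snd p \<in> Nb w" by (auto simp: Kp_def)
    then have "w \<in> Nb (fst p) \<or> w \<in> Nb (snd p)" using w sym by (auto simp: Nb_def)
    then show "w \<in> (\<Union>p\<in>Kp v. Nb (fst p) \<union> Nb (snd p))" using p by blast
  qed
  have "card ({w. Kp w \<inter> Kp v \<noteq> {}} \<inter> V) \<le> card (\<Union>p\<in>Kp v. Nb (fst p) \<union> Nb (snd p))"
    by (rule card_mono[OF _ sub]) (simp add: finKp finNb)
  also have "\<dots> \<le> (\<Sum>p\<in>Kp v. card (Nb (fst p) \<union> Nb (snd p)))"
    by (rule card_UN_le[OF finKp])
  also have "\<dots> \<le> (\<Sum>p\<in>Kp v. 2 * \<Delta>)"
  proof (rule sum_mono)
    fix p assume "p \<in> Kp v"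
    then have "fst p \<in> V" "snd p \<in> V" using pairs by (auto simp: Kp_def)
    then have "card (Nb (fst p)) \<le> \<Delta>" "card (Nb (snd p)) \<le> \<Delta>" using degmax by auto
    then show "card (Nb (fst p) \<union> Nb (snd p)) \<le> 2 * \<Delta>"
      using card_Un_le[of "Nb (fst p)" "Nb (snd p)"] by linarith
  qed
  also have "\<dots> = card (Kp v) * (2 * \<Delta>)" by simp
  also have "\<dots> \<le> \<Delta> * (2 * \<Delta>)"
    using Kp_le[of v] degmax[OF v] by (intro mult_right_mono) auto
  finally show ?thesis by (simp add: power2_eq_square)
qed

lemma indep:
  assumes v: "v \<in> V" and S: "S \<subseteq> V - {w. Kp w \<inter> Kp v \<noteq> {}} - {v}"
  shows "real (card {R\<in>Pow J. R \<in> Ev v \<and> (\<forall>w\<in>S. R \<notin> Ev w)}) \<le> pr * real (card {R\<in>Pow J. \<forall>w\<in>S. R \<notin> Ev w})"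
proof -
  have "real (card {R\<in>Pow J. R \<in> Ev v \<and> R \<in> {R. \<forall>w\<in>S. R \<notin> Ev w}}) \<le> pr * real (card {R\<in>Pow J. R \<in> {R. \<forall>w\<in>S. R \<notin> Ev w}})"
  proof (rule fiber_bound[where f = "\<lambda>R. R - Kp v"])
    show "finite (Pow J)" using finJ by simp
  next
    fix R R' assume RR: "R \<in> Pow J" "R' \<in> Pow J" "R - Kp v = R' - Kp v" and B: "R \<in> {R. \<forall>w\<in>S. R \<notin> Ev w}"
    show "R' \<in> {R. \<forall>w\<in>S. R \<notin> Ev w}"
    proof (intro CollectI ballI)
      fix w assume w: "w \<in> S"
      then have dj: "Kp w \<inter> Kp v = {}" using S by auto
      have "Tp w R = Tp w R'"
      proof (rule set_eqI)
        fix p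
        show "p \<in> Tp w R \<longleftrightarrow> p \<in> Tp w R'"
        proof (cases "p \<in> Kp w")
          case True
          then have "p \<notin> Kp v" using dj by blast
          then have "p \<in> R \<longleftrightarrow> p \<in> R'" using RR(3) by blast
          then show ?thesis by (simp add: Tp_def)
        next
          case False
          then show ?thesis by (simp add: Tp_def)
        qed
      qed
      then show "R' \<notin> Ev w" using B w by (auto simp: Ev_def)
    qed
  next
    fix R assume "R \<in> Pow J"
    then show "real (card {R'\<in>Pow J. R' - Kp v = R - Kp v \<and> R' \<in> Ev v}) \<le> pr * real (card {R'\<in>Pow J. R' - Kp v = R - Kp v})"
      using fiber_count[OF v] by simp
  qed
  then show ?thesis by simp
qed

lemma step_exists: "\<exists>R\<subseteq>J. \<forall>v\<in>V. real d / 2 - real t \<le> real (card (Nb v \<inter> (Z \<union> sel R ` J)))"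
proof -
  obtain v0 where v0: "v0 \<in> V" using Vne by blast
  have "2 \<le> d" using t0 td by simp
  also have "d \<le> \<Delta>" using degmin[OF v0] degmax[OF v0] by simp
  finally have D2: "2 \<le> \<Delta>" .
  have D1: "1 \<le> 2 * \<Delta> ^ 2" using D2 by (simp add: power2_eq_square)
  have pD: "exp 1 * pr * real (2 * \<Delta> ^ 2 + 1) \<le> 1"
  proof -
    define a where "a = real t ^ 2 / (2 * real d)"
    have "exp 1 * pr * real (2 * \<Delta> ^ 2 + 1) = (exp 1 * (2 * real \<Delta> ^ 2 + 1)) * exp (- a)"
      by (simp add: pr_def a_def)
    also have "\<dots> \<le> exp a * exp (- a)" using hyp by (intro mult_right_mono) (auto simp: a_def)
    also have "\<dots> = 1" by (simp flip: exp_add)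
    finally show ?thesis .
  qed
  have "\<exists>\<omega>\<in>Pow J. \<forall>v\<in>V. \<omega> \<notin> Ev v"
  proof (rule LLL[where G = "\<lambda>v. {w. Kp w \<inter> Kp v \<noteq> {}}" and D = "2 * \<Delta> ^ 2" and p = pr])
    show "finite (Pow J)" using finJ by simp
    show "Pow J \<noteq> {}" by blast
    show "finite V" by (rule finV)
    show "\<And>v. v \<in> V \<Longrightarrow> card ({w. Kp w \<inter> Kp v \<noteq> {}} \<inter> V) \<le> 2 * \<Delta> ^ 2" by (rule dep_bound)
    show "\<And>v S. v \<in> V \<Longrightarrow> S \<subseteq> V - {w. Kp w \<inter> Kp v \<noteq> {}} - {v} \<Longrightarrow>
       real (card {\<omega>\<in>Pow J. \<omega> \<in> Ev v \<and> (\<forall>w\<in>S. \<omega> \<notin> Ev w)}) \<le> pr * real (card {\<omega>\<in>Pow J. \<forall>w\<in>S. \<omega> \<notin> Ev w})"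
      by (rule indep)
    show "1 \<le> 2 * \<Delta> ^ 2" by (rule D1)
    show "exp 1 * pr * real (2 * \<Delta> ^ 2 + 1) \<le> 1" by (rule pD)
  qed
  then obtain R where "R \<subseteq> J" "\<forall>v\<in>V. R \<notin> Ev v" by blast
  then show ?thesis using good by blast
qed

end




definition pairing :: "'a set \<Rightarrow> ('a \<times> 'a) set \<Rightarrow> 'a set \<Rightarrow> bool" where
  "pairing V J Z \<longleftrightarrow> finite V \<and> (\<forall>p\<in>J. fst p \<in> V \<and> snd p \<in> V \<and> fst p \<noteq> snd p)
    \<and> (\<forall>p\<in>J. \<forall>q\<in>J. p \<noteq> q \<longrightarrow> {fst p, snd p} \<inter> {fst q, snd q} = {})
    \<and> Z \<subseteq> V \<and> (\<forall>p\<in>J. fst p \<notin> Z \<and> snd p \<notin> Z) \<and> V \<subseteq> Z \<union> (\<Union>p\<in>J. {fst p, snd p}) \<and> card Z \<le> 1"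

definition bad :: "('a \<Rightarrow> 'k) \<Rightarrow> ('a \<times> 'a) set \<Rightarrow> 'a set \<Rightarrow> 'a \<Rightarrow> bool" where
  "bad \<kappa> J Z x \<longleftrightarrow> x \<in> Z \<or> (\<exists>p\<in>J. x \<in> {fst p, snd p} \<and> \<kappa> (fst p) \<noteq> \<kappa> (snd p))"

lemma pairing_exists:
  "finite V \<Longrightarrow> \<exists>J Z. pairing V J Z \<and> (\<forall>c. card {x\<in>V. \<kappa> x = c \<and> bad \<kappa> J Z x} \<le> 1)"
proof (induction "card V" arbitrary: V rule: less_induct)
  case less
  show ?case
  proof (cases "card V \<le> 1")
    case True
    have "pairing V {} V" using less.prems True by (simp add: pairing_def)
    moreover have "card {x\<in>V. \<kappa> x = c \<and> bad \<kappa> {} V x} \<le> 1" for c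
    proof -
      have "card {x\<in>V. \<kappa> x = c \<and> bad \<kappa> {} V x} \<le> card V" by (rule card_mono) (use less.prems in auto)
      then show ?thesis using True by linarith
    qed
    ultimately show ?thesis by blast
  next
    case False
    have "\<exists>a b. a \<in> V \<and> b \<in> V \<and> a \<noteq> b \<and> (\<kappa> a = \<kappa> b \<or> inj_on \<kappa> V)"
    proof (cases "inj_on \<kappa> V")
      case True
      from False obtain a b where "a \<in> V" "b \<in> V" "a \<noteq> b"
        using \<open>\<not> card V \<le> 1\<close> card_le_Suc0_iff_eq[OF less.prems] by auto
      then show ?thesis using True by blast
    next
      case False
      then show ?thesis by (auto simp: inj_on_def)
    qed
    then obtain a b where ab: "a \<in> V" "b \<in> V" "a \<noteq> b" "\<kappa> a = \<kappa> b \<or> inj_on \<kappa> V" by blast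
    define V' where "V' = V - {a, b}"
    have fV': "finite V'" using less.prems by (simp add: V'_def)
    have "V' \<subset> V" using ab by (auto simp: V'_def)
    then have "card V' < card V" using less.prems by (rule psubset_card_mono[rotated])
    then obtain J' Z' where P': "pairing V' J' Z'" and B': "\<forall>c. card {x\<in>V'. \<kappa> x = c \<and> bad \<kappa> J' Z' x} \<le> 1"
      using less.hyps fV' by blast
    define J where "J = insert (a, b) J'"
    have J'V': "\<forall>p\<in>J'. fst p \<in> V' \<and> snd p \<in> V'" using P' by (simp add: pairing_def)
    have abJ': "(a, b) \<notin> J'" using J'V' by (auto simp: V'_def)
    have PJ: "pairing V J Z'"
    proof -
      have "\<forall>p\<in>J. fst p \<in> V \<and> snd p \<in> V \<and> fst p \<noteq> snd p"
        using P' ab by (auto simp: J_def pairing_def V'_def)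
      moreover have "\<forall>p\<in>J. \<forall>q\<in>J. p \<noteq> q \<longrightarrow> {fst p, snd p} \<inter> {fst q, snd q} = {}"
      proof (intro ballI impI)
        fix p q assume pq: "p \<in> J" "q \<in> J" "p \<noteq> q"
        show "{fst p, snd p} \<inter> {fst q, snd q} = {}"
        proof (cases "p = (a, b)")
          case True
          then have "q \<in> J'" using pq by (simp add: J_def)
          then show ?thesis using True J'V' by (auto simp: V'_def)
        next
          case False
          then have p': "p \<in> J'" using pq by (simp add: J_def)
          show ?thesis
          proof (cases "q = (a, b)")
            case True
            then show ?thesis using p' J'V' by (auto simp: V'_def)
          next
            case False
            then have "q \<in> J'" using pq by (simp add: J_def)
            then show ?thesis using p' pq P' by (simp add: pairing_def)
          qed
        qed
      qed
      moreover have "Z' \<subseteq> V" using P' by (auto simp: pairing_def V'_def)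
      moreover have "\<forall>p\<in>J. fst p \<notin> Z' \<and> snd p \<notin> Z'"
        using P' by (auto simp: J_def pairing_def V'_def)
      moreover have "V \<subseteq> Z' \<union> (\<Union>p\<in>J. {fst p, snd p})"
        using P' by (auto simp: J_def pairing_def V'_def)
      moreover have "card Z' \<le> 1" using P' by (simp add: pairing_def)
      ultimately show ?thesis using less.prems by (simp add: pairing_def)
    qed
    have "card {x\<in>V. \<kappa> x = c \<and> bad \<kappa> J Z' x} \<le> 1" for c
    proof (cases "\<kappa> a = \<kappa> b")
      case True
      have "{x\<in>V. \<kappa> x = c \<and> bad \<kappa> J Z' x} \<subseteq> {x\<in>V'. \<kappa> x = c \<and> bad \<kappa> J' Z' x}"
      proof
        fix x assume x: "x \<in> {x\<in>V. \<kappa> x = c \<and> bad \<kappa> J Z' x}"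
        then have bx: "x \<in> Z' \<or> (\<exists>p\<in>J. x \<in> {fst p, snd p} \<and> \<kappa> (fst p) \<noteq> \<kappa> (snd p))"
          by (simp add: bad_def)
        then have b': "x \<in> Z' \<or> (\<exists>p\<in>J'. x \<in> {fst p, snd p} \<and> \<kappa> (fst p) \<noteq> \<kappa> (snd p))"
          using True by (auto simp: J_def)
        then have "x \<in> V'" using P' unfolding pairing_def by blast
        then show "x \<in> {x\<in>V'. \<kappa> x = c \<and> bad \<kappa> J' Z' x}" using x b' by (simp add: bad_def)
      qed
      then have "card {x\<in>V. \<kappa> x = c \<and> bad \<kappa> J Z' x} \<le> card {x\<in>V'. \<kappa> x = c \<and> bad \<kappa> J' Z' x}"
        using fV' by (intro card_mono) auto
      then show ?thesis using B' by (meson le_trans)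
    next
      case False
      then have inj: "inj_on \<kappa> V" using ab by blast
      have fc: "finite {x\<in>V. \<kappa> x = c}" using less.prems by simp
      have "\<forall>x\<in>{x\<in>V. \<kappa> x = c}. \<forall>y\<in>{x\<in>V. \<kappa> x = c}. x = y"
        using inj by (auto simp: inj_on_def)
      then have "card {x\<in>V. \<kappa> x = c} \<le> 1" using card_le_Suc0_iff_eq[OF fc] by simp
      moreover have "card {x\<in>V. \<kappa> x = c \<and> bad \<kappa> J Z' x} \<le> card {x\<in>V. \<kappa> x = c}"
        using fc by (intro card_mono) auto
      ultimately show ?thesis by linarith
    qed
    then show ?thesis using PJ by blast
  qed
qed




definition unsel :: "('a \<times> 'a) set \<Rightarrow> 'a \<times> 'a \<Rightarrow> 'a" where
  "unsel R p = (if p \<in> R then snd p else fst p)"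

lemma pairing_setup: "pairing V J Z \<Longrightarrow> step_setup V J Z"
  unfolding pairing_def step_setup_def by blast

context step_setup
begin

lemma unsel_in: "p \<in> J \<Longrightarrow> unsel R p \<in> {fst p, snd p}" by (simp add: unsel_def)

lemma unsel_inj: "inj_on (unsel R) J"
proof (rule inj_onI)
  fix p q assume pq: "p \<in> J" "q \<in> J" "unsel R p = unsel R q"
  then have sp: "unsel R p \<in> {fst p, snd p} \<inter> {fst q, snd q}" using unsel_in[of p R] unsel_in[of q R] by auto
  show "p = q"
  proof (rule ccontr)
    assume "p \<noteq> q"
    then have "{fst p, snd p} \<inter> {fst q, snd q} = {}" using disj pq by blast
    then show False using sp by blast
  qed
qed

lemma unsel_notin: "p \<in> J \<Longrightarrow> unsel R p \<notin> Z \<union> sel R ` J"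
proof
  assume p: "p \<in> J" and u: "unsel R p \<in> Z \<union> sel R ` J"
  have "unsel R p \<notin> Z" using Zdisj[OF p] unsel_in[OF p, of R] by auto
  then obtain q where q: "q \<in> J" "unsel R p = sel R q" using u by blast
  show False
  proof (cases "p = q")
    case True
    then show False using q pairs[OF p] by (simp add: sel_def unsel_def split: if_splits)
  next
    case False
    then have "{fst p, snd p} \<inter> {fst q, snd q} = {}" using disj p q by blast
    then show False using q unsel_in[OF p, of R] sel_in[OF q(1), of R] by auto
  qed
qed

lemma notin_S: "x \<in> V \<Longrightarrow> x \<notin> Z \<union> sel R ` J \<Longrightarrow> \<exists>p\<in>J. x = unsel R p \<and> x \<in> {fst p, snd p}"
proof -
  assume x: "x \<in> V" "x \<notin> Z \<union> sel R ` J"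
  then obtain p where p: "p \<in> J" "x \<in> {fst p, snd p}" using cover by blast
  have "x \<noteq> sel R p" using x p by blast
  then have "x = unsel R p" using p by (auto simp: sel_def unsel_def)
  then show ?thesis using p by blast
qed

lemma atom_bal:
  fixes \<kappa> :: "'a \<Rightarrow> 'k"
  assumes B: "card {x\<in>V. \<kappa> x = c \<and> bad \<kappa> J Z x} \<le> 1"
  shows "card {x\<in>V. \<kappa> x = c \<and> x \<in> Z \<union> sel R ` J} \<le> 1 + card {x\<in>V. \<kappa> x = c \<and> x \<notin> Z \<union> sel R ` J}"
    and "card {x\<in>V. \<kappa> x = c \<and> x \<notin> Z \<union> sel R ` J} \<le> 1 + card {x\<in>V. \<kappa> x = c \<and> x \<in> Z \<union> sel R ` J}"
proof -
  define S where "S = Z \<union> sel R ` J"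
  define JA where "JA = {p\<in>J. \<kappa> (fst p) = c \<and> \<kappa> (snd p) = c}"
  define Bd where "Bd = {x\<in>V. \<kappa> x = c \<and> bad \<kappa> J Z x}"
  have JAJ: "JA \<subseteq> J" by (auto simp: JA_def)
  have finJA: "finite JA" using finJ JAJ finite_subset by blast
  have finBd: "finite Bd" using finV by (simp add: Bd_def)
  have c1: "card (sel R ` JA) = card JA" using inj_on_subset[OF sel_inj JAJ] by (simp add: card_image)
  have c2: "card (unsel R ` JA) = card JA" using inj_on_subset[OF unsel_inj JAJ] by (simp add: card_image)
  have in_sub: "{x\<in>V. \<kappa> x = c \<and> x \<in> S} \<subseteq> Bd \<union> sel R ` JA"
  proof
    fix x assume x: "x \<in> {x\<in>V. \<kappa> x = c \<and> x \<in> S}"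
    show "x \<in> Bd \<union> sel R ` JA"
    proof (cases "x \<in> Z")
      case True then show ?thesis using x by (auto simp: Bd_def bad_def)
    next
      case False
      then obtain p where p: "p \<in> J" "x = sel R p" using x by (auto simp: S_def)
      have xe: "x \<in> {fst p, snd p}" using sel_in[OF p(1)] p by simp
      show ?thesis
      proof (cases "\<kappa> (fst p) = \<kappa> (snd p)")
        case True
        then have "p \<in> JA" using x xe p by (auto simp: JA_def)
        then show ?thesis using p by blast
      next
        case False
        then show ?thesis using x xe p by (auto simp: Bd_def bad_def)
      qed
    qed
  qed
  have out_sub: "{x\<in>V. \<kappa> x = c \<and> x \<notin> S} \<subseteq> Bd \<union> unsel R ` JA"
  proof
    fix x assume x: "x \<in> {x\<in>V. \<kappa> x = c \<and> x \<notin> S}"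
    then obtain p where p: "p \<in> J" "x = unsel R p" "x \<in> {fst p, snd p}" using notin_S[of x R] by (auto simp: S_def)
    show "x \<in> Bd \<union> unsel R ` JA"
    proof (cases "\<kappa> (fst p) = \<kappa> (snd p)")
      case True
      then have "p \<in> JA" using x p by (auto simp: JA_def)
      then show ?thesis using p by blast
    next
      case False
      then show ?thesis using x p by (auto simp: Bd_def bad_def)
    qed
  qed
  have sel_sub: "sel R ` JA \<subseteq> {x\<in>V. \<kappa> x = c \<and> x \<in> S}"
  proof
    fix x assume "x \<in> sel R ` JA"
    then obtain p where p: "p \<in> JA" "x = sel R p" by blast
    then have "p \<in> J" "x \<in> {fst p, snd p}" using sel_in[of p R] JAJ by auto
    then show "x \<in> {x\<in>V. \<kappa> x = c \<and> x \<in> S}" using p pairs[of p] by (auto simp: JA_def S_def)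
  qed
  have unsel_sub: "unsel R ` JA \<subseteq> {x\<in>V. \<kappa> x = c \<and> x \<notin> S}"
  proof
    fix x assume "x \<in> unsel R ` JA"
    then obtain p where p: "p \<in> JA" "x = unsel R p" by blast
    then have pJ: "p \<in> J" and "x \<in> {fst p, snd p}" using unsel_in[of p R] JAJ by auto
    moreover have "x \<notin> S" using unsel_notin[OF pJ, of R] p by (simp add: S_def)
    ultimately show "x \<in> {x\<in>V. \<kappa> x = c \<and> x \<notin> S}" using p pairs[of p] by (auto simp: JA_def)
  qed
  have fin_in: "finite {x\<in>V. \<kappa> x = c \<and> x \<in> S}" and fin_out: "finite {x\<in>V. \<kappa> x = c \<and> x \<notin> S}"
    using finV by auto
  have "card {x\<in>V. \<kappa> x = c \<and> x \<in> S} \<le> card (Bd \<union> sel R ` JA)"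
    by (rule card_mono[OF _ in_sub]) (simp add: finBd finJA)
  also have "\<dots> \<le> card Bd + card (sel R ` JA)" by (rule card_Un_le)
  also have "\<dots> \<le> 1 + card JA" using B c1 by (simp add: Bd_def)
  also have "card JA \<le> card {x\<in>V. \<kappa> x = c \<and> x \<notin> S}"
    using card_mono[OF fin_out unsel_sub] c2 by simp
  finally show "card {x\<in>V. \<kappa> x = c \<and> x \<in> Z \<union> sel R ` J} \<le> 1 + card {x\<in>V. \<kappa> x = c \<and> x \<notin> Z \<union> sel R ` J}"
    by (simp add: S_def)
  have "card {x\<in>V. \<kappa> x = c \<and> x \<notin> S} \<le> card (Bd \<union> unsel R ` JA)"
    by (rule card_mono[OF _ out_sub]) (simp add: finBd finJA)
  also have "\<dots> \<le> card Bd + card (unsel R ` JA)" by (rule card_Un_le)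
  also have "\<dots> \<le> 1 + card JA" using B c2 by (simp add: Bd_def)
  also have "card JA \<le> card {x\<in>V. \<kappa> x = c \<and> x \<in> S}"
    using card_mono[OF fin_in sel_sub] c1 by simp
  finally show "card {x\<in>V. \<kappa> x = c \<and> x \<notin> Z \<union> sel R ` J} \<le> 1 + card {x\<in>V. \<kappa> x = c \<and> x \<in> Z \<union> sel R ` J}"
    by (simp add: S_def)
qed

lemma card_S: "card (Z \<union> sel R ` J) = card Z + card J"
proof -
  have selZ: "\<And>p. p \<in> J \<Longrightarrow> sel R p \<notin> Z" using Zdisj by (simp add: sel_def)
  have "Z \<inter> sel R ` J = {}" using selZ by blast
  then show ?thesis using finZ finJ sel_inj by (simp add: card_Un_disjoint card_image)
qed

lemma card_V: "card V = card Z + 2 * card J"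
proof -
  have V: "V = Z \<union> sel J ` J \<union> unsel J ` J"
  proof
    show "V \<subseteq> Z \<union> sel J ` J \<union> unsel J ` J"
    proof
      fix x assume "x \<in> V"
      then show "x \<in> Z \<union> sel J ` J \<union> unsel J ` J" using notin_S[of x J] by blast
    qed
    have s1: "sel J ` J \<subseteq> V"
    proof
      fix x assume "x \<in> sel J ` J"
      then obtain p where "p \<in> J" "x = sel J p" by blast
      then show "x \<in> V" using sel_in[of p J] pairs[of p] by auto
    qed
    have s2: "unsel J ` J \<subseteq> V"
    proof
      fix x assume "x \<in> unsel J ` J"
      then obtain p where "p \<in> J" "x = unsel J p" by blast
      then show "x \<in> V" using unsel_in[of p J] pairs[of p] by auto
    qed
    show "Z \<union> sel J ` J \<union> unsel J ` J \<subseteq> V" using ZV s1 s2 by blast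
  qed
  have un: "\<forall>p\<in>J. unsel J p \<notin> Z \<union> sel J ` J" using unsel_notin by blast
  have d1: "(Z \<union> sel J ` J) \<inter> unsel J ` J = {}"
  proof (rule equals0I)
    fix x assume x: "x \<in> (Z \<union> sel J ` J) \<inter> unsel J ` J"
    then obtain p where p: "p \<in> J" "x = unsel J p" by blast
    have "unsel J p \<notin> Z \<union> sel J ` J" using un p(1) by blast
    then show False using x p(2) by (metis IntD1)
  qed
  have "card V = card (Z \<union> sel J ` J) + card (unsel J ` J)"
  proof -
    have "card (Z \<union> sel J ` J \<union> unsel J ` J) = card (Z \<union> sel J ` J) + card (unsel J ` J)"
      by (rule card_Un_disjoint) (use finZ finJ d1 in auto)
    then show ?thesis using V by simp
  qed
  also have "\<dots> = card Z + card J + card J" using card_S unsel_inj finJ by (simp add: card_image)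
  finally show ?thesis by simp
qed

end




lemma sep_lower:
  assumes finV: "finite V" and Vne: "V \<noteq> {}" and finF: "finite F" and sep: "separating V F"
  shows "nat \<lceil>log 2 (real (card V))\<rceil> \<le> card F"
proof -
  define \<phi> where "\<phi> v = {S\<in>F. v \<in> S}" for v
  have "inj_on \<phi> V"
  proof (rule inj_onI)
    fix u v assume uv: "u \<in> V" "v \<in> V" "\<phi> u = \<phi> v"
    show "u = v"
    proof (rule ccontr)
      assume ne: "u \<noteq> v"
      have "\<exists>S\<in>F. card (S \<inter> {u, v}) = 1" using sep uv ne unfolding separating_def by blast
      then obtain S where S: "S \<in> F" "card (S \<inter> {u, v}) = 1" by blast
      have "(u \<in> S) = (v \<in> S)" using uv(3) S(1) by (auto simp: \<phi>_def set_eq_iff)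
      then have "S \<inter> {u, v} = {} \<or> S \<inter> {u, v} = {u, v}" by auto
      then show False using S(2) ne by auto
    qed
  qed
  moreover have "\<phi> ` V \<subseteq> Pow F" by (auto simp: \<phi>_def)
  ultimately have "card V \<le> card (Pow F)" using finF by (metis card_inj_on_le finite_Pow_iff)
  then have cV: "card V \<le> 2 ^ card F" using finF by (simp add: card_Pow)
  have n1: "real (card V) \<ge> 1" using finV Vne by (simp add: Suc_le_eq card_gt_0_iff)
  have "log 2 (real (card V)) \<le> log 2 (2 ^ card F)"
    using cV n1 by (subst log_le_cancel_iff) (auto simp flip: of_nat_power)
  also have "\<dots> = real (card F)" by (simp add: log_nat_power)
  finally have "\<lceil>log 2 (real (card V))\<rceil> \<le> int (card F)" by (simp add: ceiling_le_iff)
  then show ?thesis by linarith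
qed

lemma log_bound:
  assumes "n \<ge> (1::nat)"
  shows "n \<le> 2 ^ nat \<lceil>log 2 (real n)\<rceil>"
proof -
  have l0: "log 2 (real n) \<ge> 0" using assms by simp
  have "real n = 2 powr (log 2 (real n))" using assms by simp
  also have "\<dots> \<le> 2 powr (real (nat \<lceil>log 2 (real n)\<rceil>))"
    using l0 by (intro powr_mono) (auto simp: le_nat_iff)
  also have "\<dots> = 2 ^ nat \<lceil>log 2 (real n)\<rceil>" by (simp add: powr_realpow)
  finally have "real n \<le> real (2 ^ nat \<lceil>log 2 (real n)\<rceil>)" by simp
  then show ?thesis by (simp only: of_nat_le_iff)
qed

lemma ceil_half:
  assumes "z \<le> (1::nat)"
  shows "nat \<lceil>real (z + 2 * j) / 2\<rceil> = z + j"
proof (cases "z = 0")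
  case True
  then show ?thesis by simp
next
  case False
  then have z: "z = 1" using assms by simp
  have "\<lceil>real (1 + 2 * j) / 2\<rceil> = int (1 + j)"
    by (rule ceiling_unique) (simp_all add: field_simps)
  then show ?thesis using z by simp
qed


lemma iterate:
  fixes V :: "'a set" and E E' :: "'a \<Rightarrow> 'a \<Rightarrow> bool" and d t :: nat
  assumes gE': "graph V E'"
    and Vne: "V \<noteq> {}" and t0: "0 < t" and td: "2 * t \<le> d"
    and use: "useful d t V E' E" and md: "min_degree V E' \<ge> d"
    and hyp: "exp 1 * (2 * real (max_degree V E') ^ 2 + 1) \<le> exp (real t ^ 2 / (2 * real d))"
    and kV: "card V \<le> 2 ^ k"
  shows "i \<le> k \<Longrightarrow> \<exists>Ss. length Ss = i \<and> (\<forall>S\<in>set Ss. S \<subseteq> V \<and> hamiltonian_on E S)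
     \<and> (\<forall>x\<in>V. card {w\<in>V. map (\<lambda>S. w \<in> S) Ss = map (\<lambda>S. x \<in> S) Ss} \<le> 2 ^ (k - i))"
proof (induction i)
  case 0
  have "{w\<in>V. map (\<lambda>S. w \<in> S) [] = map (\<lambda>S. x \<in> S) ([] :: 'a set list)} = V" for x by simp
  then show ?case using kV by (intro exI[of _ "[]"]) simp
next
  case (Suc i)
  then obtain Ss where len: "length Ss = i" and SsV: "\<forall>S\<in>set Ss. S \<subseteq> V \<and> hamiltonian_on E S"
    and at: "\<forall>x\<in>V. card {w\<in>V. map (\<lambda>S. w \<in> S) Ss = map (\<lambda>S. x \<in> S) Ss} \<le> 2 ^ (k - i)" by auto
  define \<kappa> where "\<kappa> w = map (\<lambda>S. w \<in> S) Ss" for w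
  have finV: "finite V" using gE' by (simp add: graph_def)
  obtain J Z where P: "pairing V J Z" and B: "\<forall>c. card {x\<in>V. \<kappa> x = c \<and> bad \<kappa> J Z x} \<le> 1"
    using pairing_exists[OF finV] by blast
  have ss: "step_setup V J Z" by (rule pairing_setup[OF P])
  interpret st: step_full V E' J Z d t "max_degree V E'"
  proof (rule step_full.intro[OF ss], unfold step_full_axioms_def, intro conjI allI impI)
    show "E' u v \<Longrightarrow> E' v u" for u v using gE' by (simp add: graph_def)
    fix v assume v: "v \<in> V"
    have deg: "deg_in E' V v = card (step_setup.Nb V E' v)"
      by (simp add: deg_in_def step_setup.Nb_def[OF ss])
    have "min_degree V E' \<le> deg_in E' V v" unfolding min_degree_def using finV v by (intro Min_le) auto
    then show "d \<le> card (step_setup.Nb V E' v)" using md deg by linarith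
    have "deg_in E' V v \<le> max_degree V E'" unfolding max_degree_def using finV v by (intro Max_ge) auto
    then show "card (step_setup.Nb V E' v) \<le> max_degree V E'" using deg by linarith
  qed (use t0 td hyp Vne in auto)
  obtain R where R: "R \<subseteq> J" "\<forall>v\<in>V. real d / 2 - real t \<le> real (card (st.Nb v \<inter> (Z \<union> sel R ` J)))"
    using st.step_exists by blast
  define S where "S = Z \<union> sel R ` J"
  have SV: "S \<subseteq> V"
  proof -
    have "sel R ` J \<subseteq> V"
    proof
      fix x assume "x \<in> sel R ` J"
      then obtain p where "p \<in> J" "x = sel R p" by blast
      then show "x \<in> V" using st.sel_in[of p R] st.pairs[of p] by auto
    qed
    then show ?thesis using st.ZV by (auto simp: S_def)
  qed
  have Z1: "card Z \<le> 1" using P by (simp add: pairing_def)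
  have cS: "card S = nat \<lceil>real (card V) / 2\<rceil>"
    using st.card_S[of R] st.card_V ceil_half[OF Z1, of "card J"] by (simp add: S_def)
  have degS: "\<forall>v\<in>S. real (deg_in E' S v) \<ge> real d / 2 - real t"
  proof
    fix v assume v: "v \<in> S"
    have "st.Nb v \<inter> S = {u\<in>S. E' v u}" using SV by (auto simp: st.Nb_def)
    moreover have "real d / 2 - real t \<le> real (card (st.Nb v \<inter> S))"
      using R(2) v SV unfolding S_def by blast
    ultimately show "real (deg_in E' S v) \<ge> real d / 2 - real t"
      by (simp add: deg_in_def)
  qed
  have ham: "hamiltonian_on E S" using use SV cS degS unfolding useful_def by blast
  have atom: "card {w\<in>V. map (\<lambda>S'. w \<in> S') (S # Ss) = map (\<lambda>S'. x \<in> S') (S # Ss)} \<le> 2 ^ (k - Suc i)"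
    if x: "x \<in> V" for x
  proof -
    define c where "c = \<kappa> x"
    define In where "In = {w\<in>V. \<kappa> w = c \<and> w \<in> S}"
    define Out where "Out = {w\<in>V. \<kappa> w = c \<and> w \<notin> S}"
    have b1: "card In \<le> 1 + card Out" and b2: "card Out \<le> 1 + card In"
      using st.atom_bal[OF B[rule_format, of c], of R] by (simp_all add: In_def Out_def S_def)
    have "{w\<in>V. \<kappa> w = c} = In \<union> Out" by (auto simp: In_def Out_def)
    moreover have "In \<inter> Out = {}" by (auto simp: In_def Out_def)
    ultimately have "card {w\<in>V. \<kappa> w = c} = card In + card Out"
      using finV by (simp add: card_Un_disjoint In_def Out_def)
    moreover have "card {w\<in>V. \<kappa> w = c} \<le> 2 ^ (k - i)" using at x by (simp add: c_def \<kappa>_def)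
    moreover have "(2::nat) ^ (k - i) = 2 * 2 ^ (k - Suc i)" using Suc.prems
      by (metis Suc_diff_Suc Suc_le_lessD power_Suc)
    ultimately have tot: "card In + card Out \<le> 2 * 2 ^ (k - Suc i)" by simp
    have eq: "{w\<in>V. map (\<lambda>S'. w \<in> S') (S # Ss) = map (\<lambda>S'. x \<in> S') (S # Ss)} = (if x \<in> S then In else Out)"
      by (auto simp: In_def Out_def c_def \<kappa>_def)
    show ?thesis
    proof (cases "x \<in> S")
      case True
      then show ?thesis using eq tot b1 by simp
    next
      case False
      then show ?thesis using eq tot b2 by simp
    qed
  qed
  show ?case
    by (rule exI[of _ "S # Ss"]) (use len SsV SV ham atom in auto)
qed


theorem lemma3p4:
  fixes V :: "'a set" and E E' :: "'a \<Rightarrow> 'a \<Rightarrow> bool" and d t :: nat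
  assumes "graph V E" and "graph V E'" and "\<forall>u v. E' u v \<longrightarrow> E u v"
    and "V \<noteq> {}"
    and "0 < d" and "0 < t" and "2 * t \<le> d"
    and "useful d t V E' E"
    and "min_degree V E' \<ge> d"
    and "exp 1 * (2 * real (max_degree V E') ^ 2 + 1) \<le> exp (real t ^ 2 / (2 * real d))"
  shows "sh V E = nat \<lceil>log 2 (real (card V))\<rceil>"
proof -
  have finV: "finite V" using assms(2) by (simp add: graph_def)
  define k where "k = nat \<lceil>log 2 (real (card V))\<rceil>"
  have n1: "card V \<ge> 1" using finV assms(4) by (simp add: Suc_le_eq card_gt_0_iff)
  have kV: "card V \<le> 2 ^ k" unfolding k_def by (rule log_bound[OF n1])
  obtain Ss where len: "length Ss = k" and SsV: "\<forall>S\<in>set Ss. S \<subseteq> V \<and> hamiltonian_on E S"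
    and at: "\<forall>x\<in>V. card {w\<in>V. map (\<lambda>S. w \<in> S) Ss = map (\<lambda>S. x \<in> S) Ss} \<le> 2 ^ (k - k)"
    using iterate[OF assms(2) assms(4) assms(6) assms(7) assms(8) assms(9) assms(10) kV, of k] by auto
  define F0 where "F0 = set Ss"
  have sep: "separating V F0"
    unfolding separating_def
  proof (intro ballI impI)
    fix u v assume uv: "u \<in> V" "v \<in> V" "u \<noteq> v"
    show "\<exists>S\<in>F0. card (S \<inter> {u, v}) = 1"
    proof (rule ccontr)
      assume no: "\<not> (\<exists>S\<in>F0. card (S \<inter> {u, v}) = 1)"
      have "(u \<in> S) = (v \<in> S)" if S: "S \<in> set Ss" for S
      proof (rule ccontr)
        assume "(u \<in> S) \<noteq> (v \<in> S)"
        then have "S \<inter> {u, v} = {u} \<or> S \<inter> {u, v} = {v}" by auto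
        then have "card (S \<inter> {u, v}) = 1" by auto
        then show False using no S by (auto simp: F0_def)
      qed
      then have "map (\<lambda>S. v \<in> S) Ss = map (\<lambda>S. u \<in> S) Ss" by (simp add: map_eq_conv)
      then have sub: "{u, v} \<subseteq> {w\<in>V. map (\<lambda>S. w \<in> S) Ss = map (\<lambda>S. u \<in> S) Ss}" using uv by auto
      have "card {u, v} \<le> card {w\<in>V. map (\<lambda>S. w \<in> S) Ss = map (\<lambda>S. u \<in> S) Ss}"
        by (rule card_mono[OF _ sub]) (simp add: finV)
      also have "\<dots> \<le> 1" using at uv by simp
      finally show False using uv(3) by simp
    qed
  qed
  define X where "X = {F. finite F \<and> (\<forall>S\<in>F. S \<subseteq> V \<and> hamiltonian_on E S) \<and> separating V F}"
  have F0X: "F0 \<in> X" using sep SsV by (simp add: X_def F0_def)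
  have lower: "k \<le> card F" if "F \<in> X" for F
    using sep_lower[OF finV assms(4)] that by (simp add: X_def k_def)
  have "card F0 \<le> k" using len card_length[of Ss] by (simp add: F0_def)
  then have cF0: "card F0 = k" using lower[OF F0X] by simp
  have "sh V E = Inf (card ` X)" by (simp add: sh_def X_def)
  also have "\<dots> = k"
    by (rule cInf_eq_minimum) (use F0X cF0 lower in auto)
  finally show ?thesis by (simp add: k_def)
qed


end
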